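(* A metrizable space $X$ satisfies $S_{fin}(\mathcal{K}_{\Omega},\mathcal{K}_{\Omega})$ if and only if $vet(Q_p(X,\mathbb{D}))=\omega$.
   Context: A function $f:X\to Y$ is quasicontinuous if for every $x\in X$, every open $V\ni f(x)$ and every open $U\ni x$ there is a nonempty open $W\subseteq U$ with $f(W)\subseteq V$. $Q_p(X,\mathbb{D})$ is the space of quasicontinuous functions from $X$ to the discrete space $\mathbb{D}=\{0,1\}$ with the topology of pointwise convergence. $\mathcal{K}_\Omega$ is the set of families $\mathcal{U}$ of open subsets of $X$ with $X=\bigcup\{\overline{U}:U\in\mathcal{U}\}$, no element of $\mathcal{U}$ dense in $X$, and for each finite $F\subseteq X$ some $U\in\mathcal{U}$ with $F\subseteq\overline{U}$. $S_{fin}(\mathcal{A},\mathcal{B})$: for every sequence $(A_n)_{n\in\mathbb{N}}$ of elements of $\mathcal{A}$ there are finite $B_n\subseteq A_n$ with $\bigcup_n B_n\in\mathcal{B}$. $vet(Z)=\omega$ means: for every $z\in Z$ and every sequence $(A_n)_{n\in\omega}$ of subsets of $Z$ with $z\in\bigcap_n\overline{A_n}$ there are finite $K_n\subseteq A_n$ with $z\in\overline{\bigcup_n K_n}$. *)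

theory Defs
  imports "HOL-Analysis.Analysis"
begin

definition quasicontinuous_map :: "'a topology \<Rightarrow> 'b topology \<Rightarrow> ('a \<Rightarrow> 'b) \<Rightarrow> bool" where
  "quasicontinuous_map X Y f \<longleftrightarrow>
     (\<forall>x\<in>topspace X. f x \<in> topspace Y) \<and>
     (\<forall>x\<in>topspace X. \<forall>V U. openin Y V \<and> f x \<in> V \<and> openin X U \<and> x \<in> U \<longrightarrow>
        (\<exists>W. openin X W \<and> W \<noteq> {} \<and> W \<subseteq> U \<and> f ` W \<subseteq> V))"

definition D2 :: "nat topology" where
  "D2 = discrete_topology {0, 1}"

text \<open>Q_p(X,D): quasicontinuous maps X -> D with the topology of pointwise convergence,
  i.e. the subspace of the product space D^X (functions extensional outside X).\<close>
definition Qp :: "'a topology \<Rightarrow> ('a \<Rightarrow> nat) topology" where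
  "Qp X = subtopology (product_topology (\<lambda>_. D2) (topspace X))
             {f. quasicontinuous_map X D2 f}"

definition K_Omega :: "'a topology \<Rightarrow> 'a set set set" where
  "K_Omega X = {\<U>. (\<forall>U\<in>\<U>. openin X U)
      \<and> topspace X = (\<Union>U\<in>\<U>. X closure_of U)
      \<and> (\<forall>U\<in>\<U>. X closure_of U \<noteq> topspace X)
      \<and> (\<forall>F. finite F \<and> F \<subseteq> topspace X \<longrightarrow> (\<exists>U\<in>\<U>. F \<subseteq> X closure_of U))}"

definition S_fin :: "'b set set \<Rightarrow> 'b set set \<Rightarrow> bool" where
  "S_fin \<A> \<B> \<longleftrightarrow> (\<forall>A :: nat \<Rightarrow> 'b set. (\<forall>n. A n \<in> \<A>) \<longrightarrow>
      (\<exists>B :: nat \<Rightarrow> 'b set. (\<forall>n. finite (B n) \<and> B n \<subseteq> A n) \<and> (\<Union>n. B n) \<in> \<B>))"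

definition vet_omega :: "'b topology \<Rightarrow> bool" where
  "vet_omega Z \<longleftrightarrow> (\<forall>z\<in>topspace Z. \<forall>A :: nat \<Rightarrow> 'b set.
      (\<forall>n. A n \<subseteq> topspace Z) \<and> (\<forall>n. z \<in> Z closure_of A n) \<longrightarrow>
      (\<exists>K :: nat \<Rightarrow> 'b set. (\<forall>n. finite (K n) \<and> K n \<subseteq> A n) \<and> z \<in> Z closure_of (\<Union>n. K n)))"

end

theory Submission
  imports Defs
begin


lemma topspace_D2 [simp]: "topspace D2 = {0,1}"
  by (simp add: D2_def)

lemma openin_D2 [simp]: "openin D2 V \<longleftrightarrow> V \<subseteq> {0,1}"
  by (simp add: D2_def)

lemma topspace_Qp:
  "topspace (Qp X) = {f \<in> PiE (topspace X) (\<lambda>_. {0,1}). quasicontinuous_map X D2 f}"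
  by (auto simp: Qp_def)

lemma closure_Qp:
  assumes S: "S \<subseteq> topspace (Qp X)" and f: "f \<in> topspace (Qp X)"
  shows "f \<in> Qp X closure_of S \<longleftrightarrow>
     (\<forall>F. finite F \<and> F \<subseteq> topspace X \<longrightarrow> (\<exists>g\<in>S. \<forall>x\<in>F. g x = f x))"
proof -
  let ?P = "product_topology (\<lambda>_. D2) (topspace X)"
  let ?Q = "{f. quasicontinuous_map X D2 f}"
  have SQ: "?Q \<inter> S = S" using S by (auto simp: topspace_Qp)
  have fP: "f \<in> topspace ?P" and fQ: "f \<in> ?Q" using f by (auto simp: topspace_Qp)
  have "f \<in> Qp X closure_of S \<longleftrightarrow> f \<in> ?P closure_of S"
    unfolding Qp_def closure_of_subtopology SQ using fQ by auto
  also have "\<dots> \<longleftrightarrow> (\<forall>F. finite F \<and> F \<subseteq> topspace X \<longrightarrow> (\<exists>g\<in>S. \<forall>x\<in>F. g x = f x))"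
  proof
    assume L: "f \<in> ?P closure_of S"
    show "\<forall>F. finite F \<and> F \<subseteq> topspace X \<longrightarrow> (\<exists>g\<in>S. \<forall>x\<in>F. g x = f x)"
    proof (intro allI impI)
      fix F assume F: "finite F \<and> F \<subseteq> topspace X"
      define T where "T = PiE (topspace X) (\<lambda>x. if x \<in> F then {f x} else {0,1::nat})"
      have "{i \<in> topspace X. (if i \<in> F then {f i} else {0,1::nat}) \<noteq> topspace D2} \<subseteq> F" by auto
      hence fin: "finite {i \<in> topspace X. (if i \<in> F then {f i} else {0,1::nat}) \<noteq> topspace D2}"
        using F finite_subset by blast
      have "openin ?P T" unfolding T_def openin_PiE_gen
        using fin fP by (auto simp: PiE_iff)
      moreover have "f \<in> T" using fP by (auto simp: T_def PiE_iff)
      ultimately obtain g where "g \<in> S" "g \<in> T" using L by (meson in_closure_of)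
      moreover have "\<forall>x\<in>F. g x = f x"
      proof
        fix x assume "x \<in> F"
        thus "g x = f x" using \<open>g \<in> T\<close> F unfolding T_def PiE_iff by (metis singletonD subsetD)
      qed
      ultimately show "\<exists>g\<in>S. \<forall>x\<in>F. g x = f x" by blast
    qed
  next
    assume R: "\<forall>F. finite F \<and> F \<subseteq> topspace X \<longrightarrow> (\<exists>g\<in>S. \<forall>x\<in>F. g x = f x)"
    show "f \<in> ?P closure_of S"
      unfolding in_closure_of
    proof (intro conjI allI impI)
      show "f \<in> topspace ?P" by (rule fP)
      fix T assume T: "f \<in> T \<and> openin ?P T"
      then obtain U where U: "finite {i \<in> topspace X. U i \<noteq> topspace D2}"
        "\<forall>i \<in> topspace X. openin D2 (U i)" "f \<in> Pi\<^sub>E (topspace X) U" "Pi\<^sub>E (topspace X) U \<subseteq> T"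
        unfolding openin_product_topology_alt by metis
      define F where "F = {i \<in> topspace X. U i \<noteq> topspace D2}"
      obtain g where g: "g \<in> S" "\<forall>x\<in>F. g x = f x" using R U(1) unfolding F_def by force
      have gP: "g \<in> PiE (topspace X) (\<lambda>_. {0,1})" using g(1) S unfolding topspace_Qp by blast
      have "g \<in> Pi\<^sub>E (topspace X) U"
      proof -
        { fix i assume i: "i \<in> topspace X"
          have "g i \<in> U i"
          proof (cases "i \<in> F")
            case True thus ?thesis using g U(3) i by (auto simp: PiE_iff)
          next
            case False thus ?thesis using gP i by (auto simp: F_def PiE_iff)
          qed }
        thus ?thesis using gP by (auto simp: PiE_iff)
      qed
      thus "\<exists>y. y \<in> S \<and> y \<in> T" using g U(4) by blast
    qed
  qed
  finally show ?thesis .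
qed

definition chi :: "'a topology \<Rightarrow> 'a set \<Rightarrow> 'a \<Rightarrow> nat" where
  "chi X U = (\<lambda>x. if x \<in> topspace X then (if x \<in> X closure_of U then 1 else 0) else undefined)"

definition one :: "'a topology \<Rightarrow> 'a \<Rightarrow> nat" where
  "one X = (\<lambda>x. if x \<in> topspace X then 1 else undefined)"

lemma chi_in_Qp:
  assumes "openin X U" shows "chi X U \<in> topspace (Qp X)"
proof -
  have "quasicontinuous_map X D2 (chi X U)"
    unfolding quasicontinuous_map_def
  proof (intro conjI ballI allI impI)
    fix x assume "x \<in> topspace X" thus "chi X U x \<in> topspace D2" by (simp add: chi_def)
  next
    fix x V U' assume x: "x \<in> topspace X" and H: "openin D2 V \<and> chi X U x \<in> V \<and> openin X U' \<and> x \<in> U'"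
    show "\<exists>W. openin X W \<and> W \<noteq> {} \<and> W \<subseteq> U' \<and> chi X U ` W \<subseteq> V"
    proof (cases "x \<in> X closure_of U")
      case True
      then obtain y where y: "y \<in> U" "y \<in> U'" using H by (meson in_closure_of)
      have "U \<subseteq> X closure_of U" using assms by (simp add: closure_of_subset openin_subset)
      moreover have "U \<subseteq> topspace X" using assms openin_subset by blast
      ultimately have "chi X U ` (U' \<inter> U) \<subseteq> V" using H True x by (auto simp: chi_def)
      have "openin X (U' \<inter> U)" using H assms by blast
      moreover have "U' \<inter> U \<noteq> {}" using y by blast
      ultimately show ?thesis using \<open>chi X U ` (U' \<inter> U) \<subseteq> V\<close> by blast
    next
      case False
      have "openin X (U' - X closure_of U)" using H by (simp add: openin_diff)
      moreover have "chi X U ` (U' - X closure_of U) \<subseteq> V"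
        using H False x openin_subset[of X U'] by (auto simp: chi_def)
      ultimately show ?thesis using H x False by blast
    qed
  qed
  thus ?thesis by (auto simp: topspace_Qp chi_def PiE_iff extensional_def)
qed

lemma one_in_Qp: "one X \<in> topspace (Qp X)"
proof -
  have "quasicontinuous_map X D2 (one X)"
    unfolding quasicontinuous_map_def
  proof (intro conjI ballI allI impI)
    fix x assume "x \<in> topspace X" thus "one X x \<in> topspace D2" by (simp add: one_def)
  next
    fix x V U' assume x: "x \<in> topspace X" and H: "openin D2 V \<and> one X x \<in> V \<and> openin X U' \<and> x \<in> U'"
    have "one X ` U' \<subseteq> V" using H openin_subset[of X U'] x by (auto simp: one_def)
    thus "\<exists>W. openin X W \<and> W \<noteq> {} \<and> W \<subseteq> U' \<and> one X ` W \<subseteq> V" using H by blast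
  qed
  thus ?thesis by (auto simp: topspace_Qp one_def PiE_iff extensional_def)
qed

lemma K_OmegaD:
  assumes "\<U> \<in> K_Omega X"
  shows "\<And>U. U \<in> \<U> \<Longrightarrow> openin X U"
    and "topspace X = (\<Union>U\<in>\<U>. X closure_of U)"
    and "\<And>U. U \<in> \<U> \<Longrightarrow> X closure_of U \<noteq> topspace X"
    and "\<And>F. finite F \<Longrightarrow> F \<subseteq> topspace X \<Longrightarrow> \<exists>U\<in>\<U>. F \<subseteq> X closure_of U"
  using assms unfolding K_Omega_def by auto

lemma vet_imp_Sfin:
  assumes "vet_omega (Qp X)" shows "S_fin (K_Omega X) (K_Omega X)"
  unfolding S_fin_def
proof (intro allI impI)
  fix A :: "nat \<Rightarrow> 'a set set" assume A: "\<forall>n. A n \<in> K_Omega X"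
  define AA where "AA n = chi X ` A n" for n
  have AAsub: "AA n \<subseteq> topspace (Qp X)" for n
  proof -
    have "\<forall>U\<in>A n. openin X U" using K_OmegaD(1)[OF A[rule_format, of n]] by blast
    thus ?thesis unfolding AA_def by (intro image_subsetI chi_in_Qp) simp
  qed
  have one_cl: "one X \<in> Qp X closure_of AA n" for n
    unfolding closure_Qp[OF AAsub one_in_Qp]
  proof (intro allI impI)
    fix F assume F: "finite F \<and> F \<subseteq> topspace X"
    have "\<forall>F. finite F \<and> F \<subseteq> topspace X \<longrightarrow> (\<exists>U\<in>A n. F \<subseteq> X closure_of U)"
      using K_OmegaD(4)[OF A[rule_format, of n]] by blast
    then obtain U where "U \<in> A n" "F \<subseteq> X closure_of U" using F by blast
    moreover have "\<forall>x\<in>F. chi X U x = one X x" using F \<open>F \<subseteq> X closure_of U\<close> unfolding chi_def one_def by auto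
    ultimately show "\<exists>g\<in>AA n. \<forall>x\<in>F. g x = one X x" unfolding AA_def by blast
  qed
  have "\<exists>K. (\<forall>n. finite (K n) \<and> K n \<subseteq> AA n) \<and> one X \<in> Qp X closure_of (\<Union>n. K n)"
  proof -
    have "\<forall>z\<in>topspace (Qp X). \<forall>A :: nat \<Rightarrow> ('a \<Rightarrow> nat) set.
      (\<forall>n. A n \<subseteq> topspace (Qp X)) \<and> (\<forall>n. z \<in> Qp X closure_of A n) \<longrightarrow>
      (\<exists>K :: nat \<Rightarrow> ('a \<Rightarrow> nat) set. (\<forall>n. finite (K n) \<and> K n \<subseteq> A n) \<and> z \<in> Qp X closure_of (\<Union>n. K n))"
      using assms unfolding vet_omega_def .
    from this[rule_format, OF one_in_Qp, of AA] AAsub one_cl show ?thesis by blast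
  qed
  then obtain K where K: "\<forall>n. finite (K n) \<and> K n \<subseteq> AA n" "one X \<in> Qp X closure_of (\<Union>n. K n)"
    by blast
  define sel where "sel n h = (SOME U. U \<in> A n \<and> h = chi X U)" for n h
  have sel: "sel n h \<in> A n \<and> h = chi X (sel n h)" if "h \<in> K n" for n h
  proof -
    have "\<exists>U. U \<in> A n \<and> h = chi X U" using K that unfolding AA_def by blast
    thus ?thesis unfolding sel_def by (rule someI_ex)
  qed
  define B where "B n = sel n ` K n" for n
  show "\<exists>B. (\<forall>n. finite (B n) \<and> B n \<subseteq> A n) \<and> (\<Union>n. B n) \<in> K_Omega X"
  proof (intro exI conjI allI)
    fix n show "finite (B n)" using K by (simp add: B_def)
    show "B n \<subseteq> A n" unfolding B_def using sel by blast
  next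
    have Ksub: "(\<Union>n. K n) \<subseteq> topspace (Qp X)"
    proof (rule UN_least)
      fix n show "K n \<subseteq> topspace (Qp X)" using K(1) AAsub[of n] by (meson subset_trans)
    qed
    have key: "\<exists>U \<in> (\<Union>n. B n). F \<subseteq> X closure_of U" if F: "finite F" "F \<subseteq> topspace X" for F
    proof -
      have "\<exists>h\<in>(\<Union>n. K n). \<forall>x\<in>F. h x = one X x"
        using K(2) F unfolding closure_Qp[OF Ksub one_in_Qp] by simp
      then obtain h where h: "h \<in> (\<Union>n. K n)" "\<forall>x\<in>F. h x = one X x" by blast
      then obtain n where n: "h \<in> K n" by blast
      have "F \<subseteq> X closure_of (sel n h)"
      proof
        fix x assume "x \<in> F"
        hence "h x = 1" using h F by (auto simp: one_def)
        hence "chi X (sel n h) x = 1" using sel[OF n] by metis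
        thus "x \<in> X closure_of (sel n h)" using \<open>x \<in> F\<close> F by (auto simp: chi_def split: if_splits)
      qed
      moreover have "sel n h \<in> (\<Union>n. B n)" unfolding B_def using n by blast
      ultimately show ?thesis by blast
    qed
    have BA: "(\<Union>n. B n) \<subseteq> (\<Union>n. A n)" unfolding B_def using sel by blast
    show "(\<Union>n. B n) \<in> K_Omega X"
      unfolding K_Omega_def
    proof (intro CollectI conjI ballI allI impI)
      fix U assume "U \<in> (\<Union>n. B n)"
      then obtain n where "U \<in> A n" using BA by blast
      hence "U \<in> A n" .
      thus "openin X U" "X closure_of U \<noteq> topspace X" using K_OmegaD(1,3)[OF A[rule_format, of n]] by auto
    next
      show "topspace X = (\<Union>U\<in>\<Union>n. B n. X closure_of U)"
      proof
        show "topspace X \<subseteq> (\<Union>U\<in>\<Union>n. B n. X closure_of U)"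
        proof
          fix x assume "x \<in> topspace X"
          then obtain U where "U \<in> (\<Union>n. B n)" "{x} \<subseteq> X closure_of U" using key[of "{x}"] by blast
          thus "x \<in> (\<Union>U\<in>\<Union>n. B n. X closure_of U)" by blast
        qed
        show "(\<Union>U\<in>\<Union>n. B n. X closure_of U) \<subseteq> topspace X"
          by (simp add: UN_least closure_of_subset_topspace)
      qed
    next
      fix F assume "finite F \<and> F \<subseteq> topspace X"
      thus "\<exists>U\<in>\<Union>n. B n. F \<subseteq> X closure_of U" using key by blast
    qed
  qed
qed




lemma qcD:
  assumes "quasicontinuous_map X Y f" "x \<in> topspace X" "openin Y V" "f x \<in> V" "openin X U" "x \<in> U"
  shows "\<exists>W. openin X W \<and> W \<noteq> {} \<and> W \<subseteq> U \<and> f ` W \<subseteq> V"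
  using assms unfolding quasicontinuous_map_def by blast

lemma finite_pos_min:
  fixes Q :: "'b \<Rightarrow> real \<Rightarrow> bool"
  assumes "finite S" "\<forall>y\<in>S. \<exists>e>0. Q y e" "\<And>y e e'. 0 < e' \<Longrightarrow> e' \<le> e \<Longrightarrow> Q y e \<Longrightarrow> Q y e'"
  shows "\<exists>e>0. \<forall>y\<in>S. Q y e"
  using assms(1,2)
proof (induction S rule: finite_induct)
  case empty thus ?case by (intro exI[of _ 1]) auto
next
  case (insert a S)
  then obtain e where e: "e > 0" "\<forall>y\<in>S. Q y e" by auto
  obtain e' where e': "e' > 0" "Q a e'" using insert.prems by auto
  have "\<forall>y\<in>insert a S. Q y (min e e')"
  proof
    fix y assume "y \<in> insert a S"
    thus "Q y (min e e')"
    proof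
      assume "y = a" thus ?thesis using e' e assms(3)[of "min e e'" e' a] by simp
    next
      assume "y \<in> S" thus ?thesis using e' e assms(3)[of "min e e'" e y] by simp
    qed
  qed
  thus ?case using e e' by (intro exI[of _ "min e e'"]) auto
qed

context Metric_space begin

lemma seq_open_lemma:
  assumes P: "openin mtopology P" and x: "x \<in> mtopology closure_of P"
  shows "\<exists>U. openin mtopology U \<and> U \<subseteq> P \<and> x \<in> mtopology closure_of U \<and>
             mtopology closure_of U \<subseteq> insert x P"
proof -
  have xM: "x \<in> M" using x metric_closure_of by blast
  have ex: "\<exists>p. fst p \<in> P \<and> d x (fst p) < inverse (real (Suc k)) \<and> 0 < snd p \<and>
              snd p \<le> inverse (real (Suc k)) \<and> mcball (fst p) (snd p) \<subseteq> P" for k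
  proof -
    have "inverse (real (Suc k)) > 0" by simp
    then obtain w where w: "w \<in> P" "w \<in> mball x (inverse (real (Suc k)))"
      using x unfolding metric_closure_of by blast
    obtain t where t: "t > 0" "mball w t \<subseteq> P" using P w(1) unfolding openin_mtopology by blast
    define s where "s = min (t/2) (inverse (real (Suc k)))"
    have "mcball w s \<subseteq> mball w t" using t(1) by (auto simp: s_def)
    hence "mcball w s \<subseteq> P" using t by blast
    moreover have "0 < s" "s \<le> inverse (real (Suc k))" using t(1) by (auto simp: s_def)
    ultimately show ?thesis using w by (intro exI[of _ "(w,s)"]) auto
  qed
  then obtain ws where ws: "\<forall>k. fst (ws k) \<in> P \<and> d x (fst (ws k)) < inverse (real (Suc k)) \<and> 0 < snd (ws k) \<and>
              snd (ws k) \<le> inverse (real (Suc k)) \<and> mcball (fst (ws k)) (snd (ws k)) \<subseteq> P"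
    by metis
  define w where "w k = fst (ws k)" for k
  define s where "s k = snd (ws k)" for k
  have w: "w k \<in> P" "d x (w k) < inverse (real (Suc k))" "0 < s k" "s k \<le> inverse (real (Suc k))"
     "mcball (w k) (s k) \<subseteq> P" for k
    using ws unfolding w_def s_def by auto
  have PM: "P \<subseteq> M" using P openin_subset by fastforce
  define U where "U = (\<Union>k. mball (w k) (s k))"
  have Uopen: "openin mtopology U" unfolding U_def by blast
  have UP: "U \<subseteq> P" unfolding U_def using w(5) mball_subset_mcball by blast
  have xU: "x \<in> mtopology closure_of U"
    unfolding metric_closure_of
  proof (intro CollectI conjI allI impI xM)
    fix r :: real assume "r > 0"
    then obtain k where k: "inverse (real (Suc k)) < r" using reals_Archimedean by blast
    have wM: "w k \<in> M" using w(1) PM by blast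
    have "w k \<in> U" unfolding U_def using wM w(3) by auto
    moreover have "w k \<in> mball x r" using xM wM w(2)[of k] k by simp
    ultimately show "\<exists>y\<in>U. y \<in> mball x r" by blast
  qed
  have clU: "mtopology closure_of U \<subseteq> insert x P"
  proof
    fix p assume p: "p \<in> mtopology closure_of U"
    show "p \<in> insert x P"
    proof (rule ccontr)
      assume np: "p \<notin> insert x P"
      have pM: "p \<in> M" using p metric_closure_of by blast
      define \<delta> where "\<delta> = d x p"
      have \<delta>: "\<delta> > 0" using np pM xM by (auto simp: \<delta>_def)
      obtain K where K: "inverse (real (Suc K)) < \<delta>/4" using reals_Archimedean \<delta>
        by (metis divide_pos_pos zero_less_numeral)
      define U1 where "U1 = (\<Union>k\<in>{..<K}. mball (w k) (s k))"
      define U2 where "U2 = (\<Union>k\<in>{K..}. mball (w k) (s k))"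
      have eqK: "{..<K} \<union> {K..} = (UNIV::nat set)" by auto
      have "U1 \<union> U2 = (\<Union>k\<in>{..<K} \<union> {K..}. mball (w k) (s k))"
        unfolding U1_def U2_def by (rule UN_Un[symmetric])
      hence "U = U1 \<union> U2" unfolding eqK U_def by simp
      hence "mtopology closure_of U = mtopology closure_of U1 \<union> mtopology closure_of U2" by simp
      moreover have "mtopology closure_of U1 \<subseteq> P"
      proof -
        have "mtopology closure_of U1 = (\<Union>k\<in>{..<K}. mtopology closure_of (mball (w k) (s k)))"
          unfolding U1_def by (subst closure_of_Union) (auto simp: image_image)
        also have "\<dots> \<subseteq> (\<Union>k\<in>{..<K}. mcball (w k) (s k))"
          by (intro UN_mono order.refl closure_of_minimal mball_subset_mcball closedin_mcball)
        also have "\<dots> \<subseteq> P" using w(5) by blast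
        finally show ?thesis .
      qed
      moreover have "p \<notin> mtopology closure_of U2"
      proof
        assume "p \<in> mtopology closure_of U2"
        hence "\<forall>r>0. \<exists>y\<in>U2. y \<in> mball p r" unfolding metric_closure_of by blast
        moreover have "\<delta>/2 > 0" using \<delta> by simp
        ultimately obtain y where y: "y \<in> U2" "y \<in> mball p (\<delta>/2)" by blast
        then obtain k where k: "k \<ge> K" "y \<in> mball (w k) (s k)" unfolding U2_def by blast
        have yM: "y \<in> M" and wM: "w k \<in> M" using k(2) by auto
        have "inverse (real (Suc k)) \<le> inverse (real (Suc K))" using k(1)
          by (simp add: le_imp_inverse_le)
        hence "d x (w k) < \<delta>/4" "d (w k) y < \<delta>/4" 
        proof -
          have "d (w k) y < s k" using k(2) by simp
          thus "d x (w k) < \<delta>/4" "d (w k) y < \<delta>/4" using w(2)[of k] w(4)[of k] K \<open>inverse (real (Suc k)) \<le> inverse (real (Suc K))\<close> by linarith+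
        qed
        hence "d x y < \<delta>/2" using triangle[OF xM wM yM] by linarith
        moreover have "d p y < \<delta>/2" using y(2) by simp
        moreover have "\<delta> \<le> d x y + d y p" unfolding \<delta>_def using triangle[OF xM yM pM] .
        ultimately show False using commute[of p y] by linarith
      qed
      ultimately show False using p np by blast
    qed
  qed
  show ?thesis using Uopen UP xU clU by blast
qed

lemma nowhere_dense_countable:
  assumes S: "S_fin (K_Omega mtopology) (K_Omega mtopology)"
    and N: "closedin mtopology N" "mtopology interior_of N = {}"
  shows "countable N"
proof (rule ccontr)
  assume unc: "\<not> countable N"
  have NM: "N \<subseteq> M" using N(1) closedin_subset by fastforce
  have Popen: "openin mtopology (M - N)" using N(1) by (metis closedin_def topspace_mtopology)
  have Pcl: "mtopology closure_of (M - N) = M"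
    using closure_of_complement[of mtopology N] N(2) by simp
  define Ux where "Ux x = (SOME U. openin mtopology U \<and> U \<subseteq> M - N \<and> x \<in> mtopology closure_of U \<and>
             mtopology closure_of U \<subseteq> insert x (M - N))" for x
  have Ux: "openin mtopology (Ux x) \<and> Ux x \<subseteq> M - N \<and> x \<in> mtopology closure_of (Ux x) \<and>
             mtopology closure_of (Ux x) \<subseteq> insert x (M - N)" if "x \<in> M" for x
    unfolding Ux_def by (rule someI_ex, rule seq_open_lemma[OF Popen]) (use that Pcl in simp)
  define UF where "UF F = \<Union>(Ux ` F)" for F
  define \<U> where "\<U> = {UF F | F. finite F \<and> F \<subseteq> M}"
  have UFopen: "openin mtopology (UF F)" if "F \<subseteq> M" for F
    unfolding UF_def using Ux that by blast
  have UFcl: "mtopology closure_of (UF F) = (\<Union>x\<in>F. mtopology closure_of (Ux x))" if "finite F" for F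
    unfolding UF_def using that by (simp add: closure_of_Union image_image)
  have UFN: "mtopology closure_of (UF F) \<inter> N \<subseteq> F" if FF: "finite F" "F \<subseteq> M" for F
  proof
    fix y assume y: "y \<in> mtopology closure_of (UF F) \<inter> N"
    then obtain x where x: "x \<in> F" "y \<in> mtopology closure_of (Ux x)" using UFcl[OF FF(1)] by blast
    hence "y \<in> insert x (M - N)" using Ux[of x] FF(2) by blast
    thus "y \<in> F" using x(1) y by blast
  qed
  have UFin: "F \<subseteq> mtopology closure_of (UF F)" if "finite F" "F \<subseteq> M" for F
    using UFcl[OF that(1)] Ux that(2) by blast
  have UK: "\<U> \<in> K_Omega mtopology"
    unfolding K_Omega_def
  proof (intro CollectI conjI ballI allI impI)
    fix U assume "U \<in> \<U>"
    then obtain F where F: "U = UF F" "finite F" "F \<subseteq> M" unfolding \<U>_def by blast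
    show "openin mtopology U" using F UFopen by blast
    have "infinite N" using unc countable_finite by blast
    then obtain z where z: "z \<in> N" "z \<notin> F" using F(2) by (meson finite_subset subsetI)
    hence "z \<notin> mtopology closure_of U" using UFN[OF F(2,3)] F(1) by blast
    thus "mtopology closure_of U \<noteq> topspace mtopology" using z NM by auto
  next
    show "topspace mtopology = (\<Union>U\<in>\<U>. mtopology closure_of U)"
    proof
      show "topspace mtopology \<subseteq> (\<Union>U\<in>\<U>. mtopology closure_of U)"
      proof
        fix x assume "x \<in> topspace mtopology"
        hence "x \<in> M" by simp
        hence "UF {x} \<in> \<U>" "x \<in> mtopology closure_of (UF {x})" using UFin[of "{x}"] unfolding \<U>_def by auto
        thus "x \<in> (\<Union>U\<in>\<U>. mtopology closure_of U)" by blast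
      qed
      show "(\<Union>U\<in>\<U>. mtopology closure_of U) \<subseteq> topspace mtopology"
        by (rule UN_least, rule closure_of_subset_topspace)
    qed
  next
    fix F assume F: "finite F \<and> F \<subseteq> topspace mtopology"
    hence "UF F \<in> \<U>" unfolding \<U>_def by auto
    moreover have "F \<subseteq> mtopology closure_of (UF F)" using UFin F by simp
    ultimately show "\<exists>U\<in>\<U>. F \<subseteq> mtopology closure_of U" by blast
  qed
  have "\<exists>B. (\<forall>n::nat. finite (B n) \<and> B n \<subseteq> \<U>) \<and> (\<Union>n. B n) \<in> K_Omega mtopology"
  proof -
    have "\<forall>A :: nat \<Rightarrow> 'a set set. (\<forall>n. A n \<in> K_Omega mtopology) \<longrightarrow>
      (\<exists>B :: nat \<Rightarrow> 'a set set. (\<forall>n. finite (B n) \<and> B n \<subseteq> A n) \<and> (\<Union>n. B n) \<in> K_Omega mtopology)"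
      using S unfolding S_fin_def .
    from this[rule_format, of "\<lambda>_. \<U>"] UK show ?thesis by simp
  qed
  then obtain B where B: "\<forall>n::nat. finite (B n) \<and> B n \<subseteq> \<U>" "(\<Union>n. B n) \<in> K_Omega mtopology" by blast
  have cntB: "countable (\<Union>n. B n)" using B(1) by (simp add: countable_finite)
  have "N \<subseteq> (\<Union>U\<in>(\<Union>n. B n). mtopology closure_of U \<inter> N)"
    using K_OmegaD(2)[OF B(2)] NM by auto
  moreover have "countable (\<Union>U\<in>(\<Union>n. B n). mtopology closure_of U \<inter> N)"
  proof (rule countable_UN[OF cntB])
    fix U assume "U \<in> (\<Union>n. B n)"
    hence "U \<in> \<U>" using B(1) by blast
    then obtain F where F: "U = UF F" "finite F" "F \<subseteq> M" unfolding \<U>_def by blast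
    show "countable (mtopology closure_of U \<inter> N)"
      using UFN[OF F(2,3)] F by (metis countable_finite finite_subset)
  qed
  ultimately show False using unc countable_subset by blast
qed

lemma Sfin_imp_vet:
  assumes S: "S_fin (K_Omega mtopology) (K_Omega mtopology)"
  shows "vet_omega (Qp mtopology)"
  unfolding vet_omega_def
proof (intro ballI allI impI)
  fix f and A :: "nat \<Rightarrow> ('a \<Rightarrow> nat) set" assume f: "f \<in> topspace (Qp mtopology)"
    and AH: "(\<forall>n. A n \<subseteq> topspace (Qp mtopology)) \<and> (\<forall>n. f \<in> Qp mtopology closure_of A n)"
  have Asub: "A n \<subseteq> topspace (Qp mtopology)" for n using AH by blast
  have clA: "\<exists>g\<in>A n. \<forall>x\<in>F. g x = f x" if "finite F" "F \<subseteq> M" for n F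
    using AH closure_Qp[OF Asub f, of n] that by simp
  show "\<exists>K. (\<forall>n. finite (K n) \<and> K n \<subseteq> A n) \<and> f \<in> Qp mtopology closure_of (\<Union>n. K n)"
  proof (cases "\<exists>n0::nat. f \<in> A n0")
    case True
    then obtain n0 where n0: "f \<in> A n0" by blast
    define K where "K n = (if n = n0 then {f} else {})" for n :: nat
    have UK: "(\<Union>n. K n) = {f}" by (auto simp: K_def)
    have "f \<in> Qp mtopology closure_of (\<Union>n. K n)"
      unfolding UK using f closure_of_subset[of "{f}" "Qp mtopology"] by blast
    moreover have "\<forall>n. finite (K n) \<and> K n \<subseteq> A n" using n0 by (simp add: K_def)
    ultimately show ?thesis by blast
  next
    case False
    hence fA: "f \<notin> A n" for n by blast
    have fP: "f \<in> PiE M (\<lambda>_. {0,1})" and fq: "quasicontinuous_map mtopology D2 f"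
      using f by (auto simp: topspace_Qp)
    define O0 where "O0 = mtopology interior_of {y\<in>M. f y = 0}"
    define O1 where "O1 = mtopology interior_of {y\<in>M. f y = 1}"
    define Oset where "Oset = O0 \<union> O1"
    define B where "B = M - Oset"
    have Oopen: "openin mtopology Oset" unfolding Oset_def O0_def O1_def by (intro openin_Un openin_interior_of)
    have OM: "Oset \<subseteq> M" using Oopen openin_subset by fastforce
    have Oint: "x \<in> mtopology interior_of {y\<in>M. f y = f x}" if "x \<in> Oset" for x
    proof -
      have "x \<in> O0 \<or> x \<in> O1" using that Oset_def by blast
      thus ?thesis
      proof
        assume "x \<in> O0" 
        moreover hence "f x = 0" unfolding O0_def using interior_of_subset by fastforce
        ultimately show ?thesis unfolding O0_def by simp
      next
        assume "x \<in> O1" 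
        moreover hence "f x = 1" unfolding O1_def using interior_of_subset by fastforce
        ultimately show ?thesis unfolding O1_def by simp
      qed
    qed
    have Bclosed: "closedin mtopology B" unfolding B_def using Oopen
      by (metis closedin_diff closedin_topspace topspace_mtopology)
    have Bint: "mtopology interior_of B = {}"
    proof (rule ccontr)
      assume "mtopology interior_of B \<noteq> {}"
      then obtain x where x: "x \<in> mtopology interior_of B" by blast
      have xM: "x \<in> M" using x interior_of_subset_topspace by fastforce
      have fx: "f x \<in> {0,1}" using fP xM by (auto simp: PiE_iff)
      have D: "openin D2 {f x}" using fx by simp
      have xT: "x \<in> topspace mtopology" using xM by simp
      obtain W where W: "openin mtopology W" "W \<noteq> {}" "W \<subseteq> mtopology interior_of B" "f ` W \<subseteq> {f x}"
        using qcD[OF fq xT D singletonI openin_interior_of x] by blast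
      have WM: "W \<subseteq> M" using W(1) openin_subset by fastforce
      have "W \<subseteq> {y\<in>M. f y = f x}" using W(4) WM by auto
      hence "W \<subseteq> mtopology interior_of {y\<in>M. f y = f x}" using W(1) by (simp add: interior_of_maximal)
      hence "W \<subseteq> Oset" using fx unfolding Oset_def O0_def O1_def by auto
      moreover have "W \<subseteq> B" using W(3) interior_of_subset by fastforce
      ultimately show False using W(2) unfolding B_def by blast
    qed
    have cntB: "countable B" by (rule nowhere_dense_countable[OF S Bclosed Bint])
    define Bn where "Bn n = from_nat_into B ` {..<n} \<inter> B" for n
    have Bn_fin: "finite (Bn n)" for n unfolding Bn_def by simp
    have Bn_sub: "Bn n \<subseteq> B" for n unfolding Bn_def by simp
    have Bn_mono: "Bn n \<subseteq> Bn n'" if "n \<le> n'" for n n' unfolding Bn_def using that by auto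
    have Bn_cov: "\<exists>m. G \<subseteq> Bn m" if "finite G" "G \<subseteq> B" for G
      using that
    proof (induction G rule: finite_induct)
      case empty thus ?case by blast
    next
      case (insert a G)
      then obtain m where m: "G \<subseteq> Bn m" by blast
      obtain k where k: "from_nat_into B k = a" using from_nat_into_surj[OF cntB] insert.prems by blast
      have "a \<in> Bn (Suc k)" unfolding Bn_def using k insert.prems by auto
      hence "insert a G \<subseteq> Bn (max m (Suc k))" using m Bn_mono[of m "max m (Suc k)"] Bn_mono[of "Suc k" "max m (Suc k)"] by auto
      thus ?case by blast
    qed
    have BM: "B \<subseteq> M" unfolding B_def by blast
    have Pcl: "x \<in> mtopology closure_of (mtopology interior_of {y\<in>M. g y = f y})"
      if g: "g \<in> topspace (Qp mtopology)" and x: "x \<in> Oset" "g x = f x" for g x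
    proof -
      have gq: "quasicontinuous_map mtopology D2 g" and gP: "g \<in> PiE M (\<lambda>_. {0,1})"
        using g by (auto simp: topspace_Qp)
      have xM: "x \<in> M" using x OM by blast
      have gx: "g x \<in> {0,1}" using gP xM by (auto simp: PiE_iff)
      show ?thesis
        unfolding in_closure_of
      proof (intro conjI allI impI)
        show "x \<in> topspace mtopology" using xM by simp
        fix V assume V: "x \<in> V \<and> openin mtopology V"
        define Oi where "Oi = mtopology interior_of {y\<in>M. f y = f x}"
        have "x \<in> Oi" using Oint[OF x(1)] Oi_def by simp
        moreover have "openin mtopology Oi" unfolding Oi_def by (rule openin_interior_of)
        ultimately have "openin mtopology (V \<inter> Oi)" "x \<in> V \<inter> Oi" using V by auto
        moreover have D: "openin D2 {g x}" using gx by simp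
        moreover have xT: "x \<in> topspace mtopology" using xM by simp
        ultimately obtain W where W: "openin mtopology W" "W \<noteq> {}" "W \<subseteq> V \<inter> Oi" "g ` W \<subseteq> {g x}"
          using qcD[OF gq xT D singletonI] by blast
        have "W \<subseteq> {y\<in>M. g y = f y}"
        proof
          fix w assume w: "w \<in> W"
          hence "w \<in> {y\<in>M. f y = f x}" using W(3) interior_of_subset unfolding Oi_def by fastforce
          moreover have "g w = g x" using W(4) w by auto
          ultimately show "w \<in> {y\<in>M. g y = f y}" using x(2) by simp
        qed
        hence "W \<subseteq> mtopology interior_of {y\<in>M. g y = f y}" using W(1) by (simp add: interior_of_maximal)
        then obtain w where "w \<in> W" "w \<in> mtopology interior_of {y\<in>M. g y = f y}" using W(2) by blast
        thus "\<exists>y. y \<in> mtopology interior_of {y\<in>M. g y = f y} \<and> y \<in> V" using W(3) by blast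
      qed
    qed
    have cover_elem: "\<exists>U. openin mtopology U \<and> F \<subseteq> mtopology closure_of U \<and> mtopology closure_of U \<noteq> M \<and>
        (\<forall>y\<in>mtopology closure_of U. g y = f y \<or> (\<exists>b\<in>B. d b y \<le> r))"
      if g: "g \<in> topspace (Qp mtopology)" "g \<noteq> f" and F: "finite F" "F \<subseteq> M" "\<forall>x\<in>F. g x = f x"
        and r: "r > 0" for g F r
    proof -
      have gP: "g \<in> PiE M (\<lambda>_. {0,1})" using g by (auto simp: topspace_Qp)
      obtain p where p: "p \<in> M" "g p \<noteq> f p" using PiE_ext[OF gP fP] g(2) by blast
      have pF: "p \<notin> F" using p F by blast
      have "\<exists>e>0. \<forall>b\<in>F. e < d b p"
      proof (rule finite_pos_min[OF F(1)])
        show "\<forall>b\<in>F. \<exists>e>0. e < d b p"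
        proof
          fix b assume "b \<in> F"
          hence "0 < d b p" using pF p F(2) by (metis mdist_pos_less subsetD)
          thus "\<exists>e>0. e < d b p" by (intro exI[of _ "d b p / 2"]) auto
        qed
      qed auto
      then obtain e where e: "e > 0" "\<forall>b\<in>F. e < d b p" by blast
      define r' where "r' = min e r"
      have r': "r' > 0" "r' \<le> r" "\<forall>b\<in>F. r' < d b p" using e r unfolding r'_def by auto
      define P where "P = mtopology interior_of {y\<in>M. g y = f y}"
      have Popen: "openin mtopology P" unfolding P_def by (rule openin_interior_of)
      have "\<forall>x\<in>F \<inter> Oset. \<exists>V. openin mtopology V \<and> V \<subseteq> P \<and> x \<in> mtopology closure_of V \<and>
             mtopology closure_of V \<subseteq> insert x P"
      proof
        fix x assume x: "x \<in> F \<inter> Oset"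
        have "x \<in> mtopology closure_of P" unfolding P_def using Pcl[OF g(1)] x F(3) by blast
        thus "\<exists>V. openin mtopology V \<and> V \<subseteq> P \<and> x \<in> mtopology closure_of V \<and>
             mtopology closure_of V \<subseteq> insert x P" using seq_open_lemma[OF Popen] by blast
      qed
      then obtain Vx where Vx: "\<forall>x\<in>F \<inter> Oset. openin mtopology (Vx x) \<and> Vx x \<subseteq> P \<and> x \<in> mtopology closure_of (Vx x) \<and>
             mtopology closure_of (Vx x) \<subseteq> insert x P" by metis
      define U1 where "U1 = \<Union>(Vx ` (F \<inter> Oset))"
      define U2 where "U2 = \<Union>((\<lambda>b. mball b r') ` (F - Oset))"
      define U where "U = U1 \<union> U2"
      have Uopen: "openin mtopology U" unfolding U_def U1_def U2_def using Vx by blast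
      have UM: "U \<subseteq> M" using Uopen openin_subset by fastforce
      have clU1: "mtopology closure_of U1 = (\<Union>x\<in>F \<inter> Oset. mtopology closure_of (Vx x))"
        unfolding U1_def using F(1) by (simp add: closure_of_Union image_image)
      have clU2: "mtopology closure_of U2 \<subseteq> (\<Union>b\<in>F - Oset. mcball b r')"
      proof -
        have "mtopology closure_of U2 = (\<Union>b\<in>F - Oset. mtopology closure_of (mball b r'))"
          unfolding U2_def using F(1) by (simp add: closure_of_Union image_image)
        also have "\<dots> \<subseteq> (\<Union>b\<in>F - Oset. mcball b r')"
          by (intro UN_mono order.refl closure_of_minimal mball_subset_mcball closedin_mcball)
        finally show ?thesis .
      qed
      have clU: "mtopology closure_of U = mtopology closure_of U1 \<union> mtopology closure_of U2"
        unfolding U_def by simp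
      have FU: "F \<subseteq> mtopology closure_of U"
      proof
        fix x assume x: "x \<in> F"
        show "x \<in> mtopology closure_of U"
        proof (cases "x \<in> Oset")
          case True
          hence "x \<in> mtopology closure_of U1" unfolding clU1 using Vx x by blast
          thus ?thesis unfolding clU by blast
        next
          case False
          have xM: "x \<in> M" using x F(2) by blast
          hence "x \<in> mball x r'" using r'(1) by simp
          hence "x \<in> U2" unfolding U2_def using x False by blast
          hence "x \<in> U" unfolding U_def by blast
          moreover have "U \<subseteq> mtopology closure_of U" using closure_of_subset[of U mtopology] UM by simp
          ultimately show ?thesis by blast
        qed
      qed
      have good: "g y = f y \<or> (\<exists>b\<in>B. d b y \<le> r)" if y: "y \<in> mtopology closure_of U" for y
      proof (cases "y \<in> mtopology closure_of U1")
        case True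
        then obtain x where x: "x \<in> F \<inter> Oset" "y \<in> mtopology closure_of (Vx x)" unfolding clU1 by (rule UN_E)
        hence "y \<in> insert x P" using Vx by blast
        moreover have "P \<subseteq> {y\<in>M. g y = f y}" unfolding P_def by (rule interior_of_subset)
        ultimately have "g y = f y" using x(1) F(3) by blast
        thus ?thesis by blast
      next
        case False
        hence "y \<in> mtopology closure_of U2" using y clU by blast
        then obtain b where b: "b \<in> F - Oset" "y \<in> mcball b r'" using clU2 by blast
        have "b \<in> B" using b(1) F(2) unfolding B_def by blast
        moreover have "d b y \<le> r" using b(2) r'(2) by simp
        ultimately show ?thesis by blast
      qed
      have pU: "p \<notin> mtopology closure_of U"
      proof
        assume pU: "p \<in> mtopology closure_of U"
        show False
        proof (cases "p \<in> mtopology closure_of U1")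
          case True
          then obtain x where x: "x \<in> F \<inter> Oset" "p \<in> mtopology closure_of (Vx x)" unfolding clU1 by (rule UN_E)
          hence "p \<in> insert x P" using Vx by blast
          moreover have "P \<subseteq> {y\<in>M. g y = f y}" unfolding P_def by (rule interior_of_subset)
          ultimately show False using x(1) pF p(2) by blast
        next
          case False
          hence "p \<in> mtopology closure_of U2" using pU clU by blast
          then obtain b where b: "b \<in> F - Oset" "p \<in> mcball b r'" using clU2 by blast
          thus False using r'(3) by fastforce
        qed
      qed
      have "mtopology closure_of U \<noteq> M" using pU p(1) by blast
      thus ?thesis using Uopen FU good by blast
    qed
    define gsel where "gsel n F = (SOME g. g \<in> A n \<and> (\<forall>x\<in>F \<union> Bn n. g x = f x))" for n F
    have gsel: "gsel n F \<in> A n \<and> (\<forall>x\<in>F \<union> Bn n. gsel n F x = f x)" if FF: "finite F" "F \<subseteq> M" for n F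
    proof -
      have fin: "finite (F \<union> Bn n)" using FF(1) Bn_fin by simp
      have sub: "F \<union> Bn n \<subseteq> M" using FF(2) Bn_sub[of n] BM by blast
      have "\<exists>g\<in>A n. \<forall>x\<in>F \<union> Bn n. g x = f x" by (rule clA[OF fin sub])
      hence "\<exists>g. g \<in> A n \<and> (\<forall>x\<in>F \<union> Bn n. g x = f x)" by blast
      thus ?thesis unfolding gsel_def by (rule someI_ex)
    qed
    define Usel where "Usel n F = (SOME U. openin mtopology U \<and> F \<subseteq> mtopology closure_of U \<and> mtopology closure_of U \<noteq> M \<and>
        (\<forall>y\<in>mtopology closure_of U. gsel n F y = f y \<or> (\<exists>b\<in>B. d b y \<le> inverse (real (Suc n)))))" for n F
    have Usel: "openin mtopology (Usel n F) \<and> F \<subseteq> mtopology closure_of (Usel n F) \<and> mtopology closure_of (Usel n F) \<noteq> M \<and>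
        (\<forall>y\<in>mtopology closure_of (Usel n F). gsel n F y = f y \<or> (\<exists>b\<in>B. d b y \<le> inverse (real (Suc n))))"
      if FF: "finite F" "F \<subseteq> M" for n F
    proof -
      have g1: "gsel n F \<in> topspace (Qp mtopology)" using gsel[OF FF, of n] Asub[of n] by blast
      have g2: "gsel n F \<noteq> f" using gsel[OF FF, of n] fA[of n] by metis
      have g3: "\<forall>x\<in>F. gsel n F x = f x" using gsel[OF FF, of n] by blast
      have "inverse (real (Suc n)) > 0" by simp
      from cover_elem[OF g1 g2 FF g3 this] show ?thesis unfolding Usel_def by (rule someI_ex)
    qed
    define Cov where "Cov n = {Usel n F | F. finite F \<and> F \<subseteq> M}" for n
    have CovK: "Cov n \<in> K_Omega mtopology" for n
      unfolding K_Omega_def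
    proof (intro CollectI conjI ballI allI impI)
      fix U assume "U \<in> Cov n"
      then obtain F where F: "U = Usel n F" "finite F" "F \<subseteq> M" unfolding Cov_def by blast
      show "openin mtopology U" using Usel[OF F(2,3), of n] F(1) by simp
      show "mtopology closure_of U \<noteq> topspace mtopology" using Usel[OF F(2,3), of n] F(1) by simp
    next
      show "topspace mtopology = (\<Union>U\<in>Cov n. mtopology closure_of U)"
      proof
        show "topspace mtopology \<subseteq> (\<Union>U\<in>Cov n. mtopology closure_of U)"
        proof
          fix x assume "x \<in> topspace mtopology"
          hence xM: "x \<in> M" by simp
          hence "Usel n {x} \<in> Cov n" unfolding Cov_def by auto
          moreover have "x \<in> mtopology closure_of (Usel n {x})" using Usel[of "{x}" n] xM by simp
          ultimately show "x \<in> (\<Union>U\<in>Cov n. mtopology closure_of U)" by blast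
        qed
        show "(\<Union>U\<in>Cov n. mtopology closure_of U) \<subseteq> topspace mtopology"
          by (rule UN_least, rule closure_of_subset_topspace)
      qed
    next
      fix F assume F: "finite F \<and> F \<subseteq> topspace mtopology"
      hence "Usel n F \<in> Cov n" unfolding Cov_def by auto
      moreover have "F \<subseteq> mtopology closure_of (Usel n F)" using Usel[of F n] F by simp
      ultimately show "\<exists>U\<in>Cov n. F \<subseteq> mtopology closure_of U" by blast
    qed
    define Fsel where "Fsel n U = (SOME F. finite F \<and> F \<subseteq> M \<and> U = Usel n F)" for n U
    have Fsel: "finite (Fsel n U) \<and> Fsel n U \<subseteq> M \<and> U = Usel n (Fsel n U)" if "U \<in> Cov n" for n U
    proof -
      have "\<exists>F. finite F \<and> F \<subseteq> M \<and> U = Usel n F" using that unfolding Cov_def by blast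
      thus ?thesis unfolding Fsel_def by (rule someI_ex)
    qed
    have Sfin: "\<forall>A :: nat \<Rightarrow> 'a set set. (\<forall>n. A n \<in> K_Omega mtopology) \<longrightarrow>
      (\<exists>B :: nat \<Rightarrow> 'a set set. (\<forall>n. finite (B n) \<and> B n \<subseteq> A n) \<and> (\<Union>n. B n) \<in> K_Omega mtopology)"
      using S unfolding S_fin_def .
    have "\<forall>m. \<exists>Sl :: nat \<Rightarrow> 'a set set. (\<forall>j. finite (Sl j) \<and> Sl j \<subseteq> Cov (prod_encode (m,j))) \<and> (\<Union>j. Sl j) \<in> K_Omega mtopology"
    proof
      fix m
      show "\<exists>Sl :: nat \<Rightarrow> 'a set set. (\<forall>j. finite (Sl j) \<and> Sl j \<subseteq> Cov (prod_encode (m,j))) \<and> (\<Union>j. Sl j) \<in> K_Omega mtopology"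
        using Sfin[rule_format, of "\<lambda>j. Cov (prod_encode (m,j))"] CovK by blast
    qed
    hence "\<exists>Sel. \<forall>m. (\<forall>j. finite (Sel m j) \<and> Sel m j \<subseteq> Cov (prod_encode (m,j))) \<and> (\<Union>j. Sel m j) \<in> K_Omega mtopology"
      by (rule choice)
    then obtain Sel where Sel: "\<forall>m. (\<forall>j. finite (Sel m j) \<and> Sel m j \<subseteq> Cov (prod_encode (m,j))) \<and> (\<Union>j. Sel m j) \<in> K_Omega mtopology"
      by blast
    define K where "K n = (\<lambda>U. gsel n (Fsel n U)) ` Sel (fst (prod_decode n)) (snd (prod_decode n))" for n
    have SelCov: "Sel (fst (prod_decode n)) (snd (prod_decode n)) \<subseteq> Cov n" for n
    proof -
      have "prod_encode (fst (prod_decode n), snd (prod_decode n)) = n" by simp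
      thus ?thesis using Sel by metis
    qed
    have Kprop: "finite (K n) \<and> K n \<subseteq> A n" for n
    proof
      show "finite (K n)" unfolding K_def using Sel by simp
      show "K n \<subseteq> A n"
      proof
        fix h assume "h \<in> K n"
        then obtain U where U: "U \<in> Sel (fst (prod_decode n)) (snd (prod_decode n))" "h = gsel n (Fsel n U)"
          unfolding K_def by blast
        have "U \<in> Cov n" using U(1) SelCov by blast
        hence "finite (Fsel n U)" "Fsel n U \<subseteq> M" using Fsel by blast+
        thus "h \<in> A n" using gsel U(2) by blast
      qed
    qed
    have Ksub: "(\<Union>n. K n) \<subseteq> topspace (Qp mtopology)"
    proof (rule UN_least)
      fix n show "K n \<subseteq> topspace (Qp mtopology)" using Kprop[of n] Asub[of n] by (meson subset_trans)
    qed
    have "f \<in> Qp mtopology closure_of (\<Union>n. K n)"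
      unfolding closure_Qp[OF Ksub f]
    proof (intro allI impI)
      fix F' assume F': "finite F' \<and> F' \<subseteq> topspace mtopology"
      have F'M: "F' \<subseteq> M" using F' by simp
      obtain m0 where m0: "F' \<inter> B \<subseteq> Bn m0" using Bn_cov[of "F' \<inter> B"] F' by blast
      have "\<exists>e>0. \<forall>y\<in>F' \<inter> Oset. mball y e \<subseteq> Oset"
      proof (rule finite_pos_min)
        show "finite (F' \<inter> Oset)" using F' by simp
        show "\<forall>y\<in>F' \<inter> Oset. \<exists>e>0. mball y e \<subseteq> Oset" using Oopen unfolding openin_mtopology by blast
        fix y e e' assume "0 < e'" "e' \<le> e" "mball y e \<subseteq> Oset"
        hence "mball y e' \<subseteq> mball y e" by (auto simp: mball_def)
        thus "mball y e' \<subseteq> Oset" using \<open>mball y e \<subseteq> Oset\<close> by (rule subset_trans)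
      qed
      then obtain e where e: "e > 0" "\<forall>y\<in>F' \<inter> Oset. mball y e \<subseteq> Oset" by blast
      obtain k where k: "inverse (real (Suc k)) < e" using reals_Archimedean[OF e(1)] by blast
      define m where "m = max m0 k"
      have KS: "(\<Union>j. Sel m j) \<in> K_Omega mtopology" using Sel[rule_format, of m] by (rule conjunct2)
      have "\<exists>U\<in>(\<Union>j. Sel m j). F' \<subseteq> mtopology closure_of U"
        using K_OmegaD(4)[OF KS] F' by simp
      then obtain U where U: "U \<in> (\<Union>j. Sel m j)" "F' \<subseteq> mtopology closure_of U" by blast
      then obtain j where j: "U \<in> Sel m j" by blast
      define n where "n = prod_encode (m, j)"
      have nm: "m \<le> n" unfolding n_def by (rule le_prod_encode_1)
      have dec: "prod_decode n = (m, j)" unfolding n_def by simp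
      have UC: "U \<in> Cov n" using j Sel unfolding n_def by blast
      define F where "F = Fsel n U"
      have FF: "finite F" "F \<subseteq> M" "U = Usel n F" using Fsel[OF UC] unfolding F_def by blast+
      define g where "g = gsel n F"
      have gK: "g \<in> K n" unfolding g_def F_def K_def dec using j by simp
      have "\<forall>x\<in>F'. g x = f x"
      proof
        fix x assume x: "x \<in> F'"
        show "g x = f x"
        proof (cases "x \<in> B")
          case True
          hence "x \<in> Bn n" using m0 x Bn_mono[of m0 n] nm unfolding m_def by auto
          thus ?thesis using gsel[OF FF(1,2), of n] unfolding g_def by blast
        next
          case False
          hence xO: "x \<in> Oset" using x F'M unfolding B_def by blast
          have "x \<in> mtopology closure_of (Usel n F)" using U(2) x FF(3) by blast
          hence alt: "g x = f x \<or> (\<exists>b\<in>B. d b x \<le> inverse (real (Suc n)))"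
            using Usel[OF FF(1,2), of n] unfolding g_def by blast
          show ?thesis
          proof (rule ccontr)
            assume "g x \<noteq> f x"
            then obtain b where b: "b \<in> B" "d b x \<le> inverse (real (Suc n))" using alt by blast
            have "inverse (real (Suc n)) \<le> inverse (real (Suc k))"
              using nm unfolding m_def by (simp add: le_imp_inverse_le)
            hence "d x b < e" using b(2) k commute[of b x] by linarith
            moreover have "x \<in> M" "b \<in> M" using xO OM b(1) BM by blast+
            ultimately have "b \<in> mball x e" by simp
            hence "b \<in> Oset" using e(2) x xO by blast
            thus False using b(1) unfolding B_def by blast
          qed
        qed
      qed
      thus "\<exists>g\<in>\<Union>n. K n. \<forall>x\<in>F'. g x = f x" using gK by blast
    qed
    thus ?thesis using Kprop by blast
  qed
qed

end

theorem corollary4p4: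
  fixes X :: "'a topology"
  assumes "metrizable_space X"
  shows "S_fin (K_Omega X) (K_Omega X) \<longleftrightarrow> vet_omega (Qp X)"
proof -
  obtain M d where Md: "Metric_space M d" "X = Metric_space.mtopology M d"
    using assms unfolding metrizable_space_def by blast
  show ?thesis
  proof
    assume "S_fin (K_Omega X) (K_Omega X)"
    thus "vet_omega (Qp X)" using Metric_space.Sfin_imp_vet[OF Md(1)] Md(2) by simp
  next
    assume "vet_omega (Qp X)"
    thus "S_fin (K_Omega X) (K_Omega X)" by (rule vet_imp_Sfin)
  qed
qed

end
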